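(* Let $0\to V\to (W,I)\xrightarrow{\sigma}(T,j)\to0$ be a short exact sequence of finite-dimensional complex vector spaces (complex-linear maps) with $\dim_\mathbb{C}T=1$, and let $\Omega$ be an alternating real trilinear form on $W$ such that (i) $\Omega(v_1,v_2,v_3)=0$ for all $v_1,v_2,v_3\in V$; (ii) $\Omega(\xi,\cdot,\cdot)|_V$ is non-degenerate for all $\xi\in W$ with $\sigma(\xi)\neq0$; (iii) $\Omega(I\xi,v_1,v_2)=-\Omega(\xi,v_1,Iv_2)$ for all $\xi\in W$, $v_1,v_2\in V$. Then $\dim_\mathbb{R}V=4n$ for some $n$ and there is a real basis $\{e_1,e_2,a_1^k,a_2^k,b_1^k,b_2^k\}_{k=1}^n$ of $W$ such that $T=\mathrm{span}_\mathbb{R}\{\sigma(e_1),\sigma(e_2)\}$, $V=\mathrm{span}_\mathbb{R}\{a_1^k,a_2^k,b_1^k,b_2^k\}_{k=1}^n$, $Ie_1=e_2$, $Ia_1^k=a_2^k$, $Ib_1^k=-b_2^k$, and, with $\{\epsilon_1,\epsilon_2,\alpha_1^k,\alpha_2^k,\beta_1^k,\beta_2^k\}$ the dual basis, $$\Omega=\sum_{k=1}^n\Big((\beta_1^k\wedge\alpha_1^k+\beta_2^k\wedge\alpha_2^k)\wedge\epsilon_2-(\beta_1^k\wedge\alpha_2^k-\beta_2^k\wedge\alpha_1^k)\wedge\epsilon_1\Big)+\nu\wedge\epsilon_1\wedge\epsilon_2$$ for some linear 1-form $\nu$ vanishing on $e_1,e_2$. *)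

theory Defs
  imports Complex_Main
begin

text \<open>A complex vector space is modelled as a real vector space together with a
  complex structure, i.e. a real-linear map J with J (J x) = - x (J = multiplication by i).
  Complex-linear maps are real-linear maps intertwining the complex structures.\<close>

definition complex_structure :: "('a::real_vector \<Rightarrow> 'a) \<Rightarrow> bool" where
  "complex_structure J \<longleftrightarrow> linear J \<and> (\<forall>x. J (J x) = - x)"

definition trilinear :: "('a::real_vector \<Rightarrow> 'a \<Rightarrow> 'a \<Rightarrow> real) \<Rightarrow> bool" where
  "trilinear F \<longleftrightarrow>
     (\<forall>y z. linear (\<lambda>x. F x y z)) \<and> (\<forall>x z. linear (\<lambda>y. F x y z)) \<and> (\<forall>x y. linear (\<lambda>z. F x y z))"

definition alternating3 :: "('a \<Rightarrow> 'a \<Rightarrow> 'a \<Rightarrow> real) \<Rightarrow> bool" where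
  "alternating3 F \<longleftrightarrow>
     (\<forall>x z. F x x z = 0) \<and> (\<forall>x y. F x y y = 0) \<and> (\<forall>x y. F x y x = 0)"

text \<open>Wedge product of three 1-forms (determinant convention):
  (a \<and> b \<and> c)(x,y,z) = det [a,b,c applied to x,y,z].\<close>

definition wedge3 :: "('a \<Rightarrow> real) \<Rightarrow> ('a \<Rightarrow> real) \<Rightarrow> ('a \<Rightarrow> real) \<Rightarrow> 'a \<Rightarrow> 'a \<Rightarrow> 'a \<Rightarrow> real" where
  "wedge3 a b c x y z =
     a x * (b y * c z - b z * c y) - a y * (b x * c z - b z * c x) + a z * (b x * c y - b y * c x)"

datatype bidx = Ie1 | Ie2 | Ia1 nat | Ia2 nat | Ib1 nat | Ib2 nat

definition bidx_set :: "nat \<Rightarrow> bidx set" where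
  "bidx_set n = {Ie1, Ie2} \<union> (\<Union>k\<in>{1..n}. {Ia1 k, Ia2 k, Ib1 k, Ib2 k})"

definition is_basis_family :: "('i \<Rightarrow> 'a::real_vector) \<Rightarrow> 'i set \<Rightarrow> bool" where
  "is_basis_family B S \<longleftrightarrow> inj_on B S \<and> independent (B ` S) \<and> span (B ` S) = UNIV"

definition is_dual_family :: "('i \<Rightarrow> 'a::real_vector) \<Rightarrow> ('i \<Rightarrow> 'a \<Rightarrow> real) \<Rightarrow> 'i set \<Rightarrow> bool" where
  "is_dual_family B d S \<longleftrightarrow>
     (\<forall>i\<in>S. linear (d i)) \<and> (\<forall>i\<in>S. \<forall>j\<in>S. d i (B j) = (if i = j then 1 else 0))"

end

theory Submission
  imports Defs
begin



lemma lin_eq_span: "linear f \<Longrightarrow> linear g \<Longrightarrow> x \<in> span B \<Longrightarrow> (\<And>b. b\<in>B \<Longrightarrow> f b = g b) \<Longrightarrow> f x = g x"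
  by (rule linear_eq_on)

lemma dual_imp_basis:
  assumes lin: "\<forall>i\<in>S. linear (f i)"
    and kr: "\<forall>i\<in>S. \<forall>j\<in>S. f i (B j) = (if i = j then (1::real) else 0)"
  shows "inj_on B S \<and> independent (B ` S)"
proof
  show "inj_on B S"
  proof (rule inj_onI)
    fix i j assume "i \<in> S" "j \<in> S" "B i = B j"
    then have "f i (B i) = f i (B j)" by simp
    with kr \<open>i\<in>S\<close> \<open>j\<in>S\<close> show "i = j" by (auto split: if_splits)
  qed
  show "independent (B ` S)"
  proof
    assume "dependent (B ` S)"
    then obtain i where i: "i \<in> S" "B i \<in> span (B ` S - {B i})"
      unfolding dependent_def by auto
    have "f i (B i) = (\<lambda>x. 0) (B i)"
    proof (rule lin_eq_span[OF _ _ i(2)])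
      show "linear (f i)" using lin i by auto
      show "linear (\<lambda>x. 0::real)" by (simp add: linear_zero)
      fix b assume "b \<in> B ` S - {B i}"
      then obtain j where "j \<in> S" "b = B j" "j \<noteq> i" by auto
      then show "f i b = 0" using kr i by auto
    qed
    with kr i show False by auto
  qed
qed



lemma dim_strict:
  fixes A B :: "'w::real_vector set"
  assumes finW: "\<exists>S. finite S \<and> span S = (UNIV::'w::real_vector set)"
    and A: "subspace A" and AB: "A \<subseteq> B" and x: "x \<in> B" "x \<notin> A"
  shows "dim A < dim B"
proof -
  obtain S where S: "finite S" "span S = (UNIV::'w set)" using finW by blast
  obtain C where C: "C \<subseteq> A" "independent C" "A \<subseteq> span C" "card C = dim A"
    using basis_exists[of A] by blast
  obtain D where D: "D \<subseteq> B" "independent D" "B \<subseteq> span D" "card D = dim B"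
    using basis_exists[of B] by blast
  have fC: "finite C" using independent_span_bound[of S C] S C(2) by auto
  have fD: "finite D" using independent_span_bound[of S D] S D(2) by auto
  have "span C \<subseteq> A" using span_minimal[OF C(1) A] .
  then have "x \<notin> span C" using x by auto
  then have ind: "independent (insert x C)" using independent_insertI C(2) by blast
  have "insert x C \<subseteq> span D" using C(1) AB x D(3) by auto
  then have "card (insert x C) \<le> card D" using independent_span_bound[of D "insert x C"] fD ind by auto
  moreover have "x \<notin> C" using C(1) x by auto
  ultimately show ?thesis using fC C(4) D(4) by simp
qed

locale sympl =
  fixes I :: "'w::real_vector \<Rightarrow> 'w" and om :: "'w \<Rightarrow> 'w \<Rightarrow> real" and V :: "'w set"
  assumes linI: "linear I" and II: "\<And>x. I (I x) = - x"
    and lin1: "\<And>y. linear (\<lambda>x. om x y)" and lin2: "\<And>x. linear (om x)"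
    and alt: "\<And>x. om x x = 0"
    and finW: "\<exists>S. finite S \<and> span S = (UNIV::'w set)"
    and subV: "subspace V" and IV: "\<And>v. v \<in> V \<Longrightarrow> I v \<in> V"
    and symI: "\<And>x y. x \<in> V \<Longrightarrow> y \<in> V \<Longrightarrow> om (I x) y = om x (I y)"
begin

lemma om_add1 [simp]: "om (x + y) z = om x z + om y z"
  using linear_add[OF lin1[of z]] by simp
lemma om_add2 [simp]: "om z (x + y) = om z x + om z y"
  using linear_add[OF lin2[of z]] by simp
lemma om_scale1 [simp]: "om (c *\<^sub>R x) z = c * om x z"
  using linear_scale[OF lin1[of z]] by simp
lemma om_scale2 [simp]: "om z (c *\<^sub>R x) = c * om z x"
  using linear_scale[OF lin2[of z]] by simp
lemma om_neg1 [simp]: "om (- x) z = - om x z"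
  using linear_neg[OF lin1[of z]] by simp
lemma om_neg2 [simp]: "om z (- x) = - om z x"
  using linear_neg[OF lin2[of z]] by simp
lemma om_diff1 [simp]: "om (x - y) z = om x z - om y z"
  using linear_diff[OF lin1[of z]] by simp
lemma om_diff2 [simp]: "om z (x - y) = om z x - om z y"
  using linear_diff[OF lin2[of z]] by simp
lemma om_zero1 [simp]: "om 0 z = 0"
  using linear_0[OF lin1[of z]] by simp
lemma om_zero2 [simp]: "om z 0 = 0"
  using linear_0[OF lin2[of z]] by simp
lemma I_add [simp]: "I (x + y) = I x + I y" using linear_add[OF linI] .
lemma I_scale [simp]: "I (c *\<^sub>R x) = c *\<^sub>R I x" using linear_scale[OF linI] .
lemma I_neg [simp]: "I (- x) = - I x" using linear_neg[OF linI] .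
lemma I_diff [simp]: "I (x - y) = I x - I y" using linear_diff[OF linI] .
lemma I_zero [simp]: "I 0 = 0" using linear_0[OF linI] .

lemma antisym: "om x y = - om y x"
proof -
  have "om (x + y) (x + y) = om x x + om x y + om y x + om y y" by simp
  then have "om x y + om y x = 0" by (simp add: alt)
  then show ?thesis by linarith
qed

lemma om_xIx: "x \<in> V \<Longrightarrow> om x (I x) = 0"
  using symI[of x x] antisym[of "I x" x] IV by auto

lemma om_II: "x \<in> V \<Longrightarrow> y \<in> V \<Longrightarrow> om (I x) (I y) = - om x y"
  using symI[of x "I y"] IV II by simp

definition gram where "gram n a1 a2 b1 b2 \<longleftrightarrow> (\<forall>k\<in>{1..n}. \<forall>l\<in>{1..n}.
  om (a1 k) (a1 l) = 0 \<and> om (a1 k) (a2 l) = 0 \<and> om (a2 k) (a1 l) = 0 \<and> om (a2 k) (a2 l) = 0 \<and>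
  om (b1 k) (b1 l) = 0 \<and> om (b1 k) (b2 l) = 0 \<and> om (b2 k) (b1 l) = 0 \<and> om (b2 k) (b2 l) = 0 \<and>
  om (b1 k) (a1 l) = 0 \<and> om (b1 k) (a2 l) = (if k = l then -1 else 0) \<and>
  om (b2 k) (a1 l) = (if k = l then 1 else 0) \<and> om (b2 k) (a2 l) = 0)"

definition fams :: "nat \<Rightarrow> (nat \<Rightarrow> 'w) \<Rightarrow> (nat \<Rightarrow> 'w) \<Rightarrow> (nat \<Rightarrow> 'w) \<Rightarrow> (nat \<Rightarrow> 'w) \<Rightarrow> 'w set"
  where "fams n a1 a2 b1 b2 = (\<Union>k\<in>{1..n}. {a1 k, a2 k, b1 k, b2 k})"

lemma construct:
  "subspace U \<Longrightarrow> U \<subseteq> V \<Longrightarrow> (\<forall>u\<in>U. I u \<in> U) \<Longrightarrow> (\<forall>u\<in>U. (\<forall>w\<in>U. om u w = 0) \<longrightarrow> u = 0) \<Longrightarrow>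
   \<exists>n a1 a2 b1 b2. (\<forall>k\<in>{1..n}. a1 k \<in> U \<and> b1 k \<in> U \<and> a2 k = I (a1 k) \<and> b2 k = - I (b1 k))
     \<and> gram n a1 a2 b1 b2 \<and> span (fams n a1 a2 b1 b2) = U"
proof (induction "dim U" arbitrary: U rule: less_induct)
  case less
  note subU = less.prems(1) and UV = less.prems(2) and IU = less.prems(3) and ndU = less.prems(4)
  show ?case
  proof (cases "U = {0}")
    case True
    show ?thesis by (rule exI[of _ 0]) (auto simp: gram_def fams_def True)
  next
    case False
    then obtain a where a: "a \<in> U" "a \<noteq> 0" using subspace_0[OF subU] by blast
    obtain w where w: "w \<in> U" "om a w \<noteq> 0" using ndU a by blast
    have aV: "a \<in> V" and wV: "w \<in> V" using a w UV by auto
    define p where "p = om w a"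
    define q where "q = om w (I a)"
    define r where "r = p^2 + q^2"
    have "p \<noteq> 0" using w antisym[of a w] by (simp add: p_def)
    then have r0: "r > 0" unfolding r_def by (simp add: add_pos_nonneg)
    define b where "b = (-q/r) *\<^sub>R w + (p/r) *\<^sub>R I w"
    have bU: "b \<in> U" unfolding b_def
      by (intro subspace_add[OF subU] subspace_scale[OF subU]) (use w IU in auto)
    have bV: "b \<in> V" using bU UV by auto
    have b_a: "om b a = 0"
      unfolding b_def using symI[OF IV[OF wV] aV] symI[OF wV aV] r0
      by (simp add: p_def q_def field_simps)
    have "om b (I a) = (-q/r)*q + (p/r)*(-p)"
      unfolding b_def using om_II[OF wV aV] by (simp add: p_def q_def)
    also have "\<dots> = -(p^2+q^2)/r" using r0 by (simp add: field_simps power2_eq_square)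
    also have "\<dots> = -1" unfolding r_def[symmetric] using r0 by simp
    finally have b_Ia: "om b (I a) = -1" .
    define a2 where "a2 = I a"
    define b2 where "b2 = - I b"
    have a2V: "a2 \<in> V" and b2V: "b2 \<in> V" unfolding a2_def b2_def
      using IV aV bV subspace_neg[OF subV] by auto
    have a2U: "a2 \<in> U" and b2U: "b2 \<in> U" unfolding a2_def b2_def
      using IU a bU subspace_neg[OF subU] by auto
    have Ia2: "I a2 = - a" and Ib: "I b = - b2" and Ib2: "I b2 = b"
      unfolding a2_def b2_def by (simp_all add: II)
    have v1: "om a a = 0" "om a a2 = 0" "om a2 a = 0" "om a2 a2 = 0"
      using alt om_xIx[OF aV] antisym[of a2 a] by (auto simp: a2_def)
    have v2: "om b b = 0" "om b b2 = 0" "om b2 b = 0" "om b2 b2 = 0"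
      using alt om_xIx[OF bV] antisym[of b2 b] by (auto simp: b2_def)
    have v3: "om b a = 0" "om b a2 = -1" "om b2 a = 1" "om b2 a2 = 0"
      using b_a b_Ia symI[OF bV aV] om_II[OF bV aV] by (auto simp: a2_def b2_def)
    have v4: "om a b = 0" "om a2 b = 1" "om a b2 = -1" "om a2 b2 = 0"
      using v3 antisym[of a b] antisym[of a2 b] antisym[of a b2] antisym[of a2 b2] by auto
    note vals = v1 v2 v3 v4
    define U' where "U' = {u\<in>U. om a u = 0 \<and> om a2 u = 0 \<and> om b u = 0 \<and> om b2 u = 0}"
    have U'U: "U' \<subseteq> U" unfolding U'_def by auto
    have subU': "subspace U'"
      using subU unfolding U'_def subspace_def by auto
    have IU': "\<forall>u\<in>U'. I u \<in> U'"
    proof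
      fix u assume u: "u \<in> U'"
      then have uV: "u \<in> V" using U'U UV by auto
      have "om a (I u) = om a2 u" using symI[OF aV uV] by (simp add: a2_def)
      moreover have "om a2 (I u) = - om a u" using symI[OF a2V uV] by (simp add: Ia2)
      moreover have "om b (I u) = - om b2 u" using symI[OF bV uV] by (simp add: Ib)
      moreover have "om b2 (I u) = om b u" using symI[OF b2V uV] by (simp add: Ib2)
      ultimately show "I u \<in> U'" using u IU unfolding U'_def by auto
    qed
    have decomp: "\<And>u. u \<in> U \<Longrightarrow> \<exists>u'\<in>U'. \<exists>c1 c2 c3 c4. u = u' + c1 *\<^sub>R a + c2 *\<^sub>R a2 + c3 *\<^sub>R b + c4 *\<^sub>R b2"
    proof -
      fix u assume u: "u \<in> U"
      define u' where "u' = u - (om b2 u) *\<^sub>R a + (om b u) *\<^sub>R a2 - (om a2 u) *\<^sub>R b + (om a u) *\<^sub>R b2"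
      have "u' \<in> U" unfolding u'_def using u a a2U bU b2U subU
        by (simp add: subspace_add subspace_diff subspace_scale)
      moreover have "om a u' = 0 \<and> om a2 u' = 0 \<and> om b u' = 0 \<and> om b2 u' = 0"
        unfolding u'_def by (simp add: vals)
      ultimately have "u' \<in> U'" unfolding U'_def by auto
      moreover have "u = u' + (om b2 u) *\<^sub>R a - (om b u) *\<^sub>R a2 + (om a2 u) *\<^sub>R b - (om a u) *\<^sub>R b2"
        unfolding u'_def by (simp add: algebra_simps)
      ultimately show "\<exists>u'\<in>U'. \<exists>c1 c2 c3 c4. u = u' + c1 *\<^sub>R a + c2 *\<^sub>R a2 + c3 *\<^sub>R b + c4 *\<^sub>R b2"
        by (metis add.assoc diff_conv_add_uminus scaleR_minus_left)
    qed
    have ndU': "\<forall>u\<in>U'. (\<forall>w\<in>U'. om u w = 0) \<longrightarrow> u = 0"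
    proof (intro ballI impI)
      fix u assume u: "u \<in> U'" and h: "\<forall>w\<in>U'. om u w = 0"
      have ux: "om u a = 0" "om u a2 = 0" "om u b = 0" "om u b2 = 0"
        using u antisym[of u a] antisym[of u a2] antisym[of u b] antisym[of u b2]
        unfolding U'_def by auto
      have "\<forall>w\<in>U. om u w = 0"
      proof
        fix w assume "w \<in> U"
        then obtain w' c1 c2 c3 c4 where "w' \<in> U'" and weq: "w = w' + c1 *\<^sub>R a + c2 *\<^sub>R a2 + c3 *\<^sub>R b + c4 *\<^sub>R b2"
          using decomp by blast
        then show "om u w = 0" using h ux by (simp add: weq)
      qed
      then show "u = 0" using ndU u U'U by auto
    qed
    have "a \<notin> U'" using v3 unfolding U'_def by auto
    then have dlt: "dim U' < dim U" using dim_strict[OF finW subU' U'U a(1)] by blast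
    obtain n A1 A2 B1 B2 where
      IH1: "\<forall>k\<in>{1..n}. A1 k \<in> U' \<and> B1 k \<in> U' \<and> A2 k = I (A1 k) \<and> B2 k = - I (B1 k)"
      and IH2: "gram n A1 A2 B1 B2" and IH3: "span (fams n A1 A2 B1 B2) = U'"
      using less.hyps[OF dlt subU' _ IU' ndU'] U'U UV by blast
    define A1' where "A1' = A1(Suc n := a)"
    define A2' where "A2' = A2(Suc n := a2)"
    define B1' where "B1' = B1(Suc n := b)"
    define B2' where "B2' = B2(Suc n := b2)"
    have rng: "{1..Suc n} = insert (Suc n) {1..n}" by auto
    have old: "\<And>k. k \<in> {1..n} \<Longrightarrow> A1' k = A1 k \<and> A2' k = A2 k \<and> B1' k = B1 k \<and> B2' k = B2 k"
      by (auto simp: A1'_def A2'_def B1'_def B2'_def)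
    have new: "A1' (Suc n) = a" "A2' (Suc n) = a2" "B1' (Suc n) = b" "B2' (Suc n) = b2"
      by (auto simp: A1'_def A2'_def B1'_def B2'_def)
    have famsN: "fams (Suc n) A1' A2' B1' B2' = insert a (insert a2 (insert b (insert b2 (fams n A1 A2 B1 B2))))"
      unfolding fams_def rng using old new by auto
    have oldU': "\<And>k. k \<in> {1..n} \<Longrightarrow> A1 k \<in> U' \<and> A2 k \<in> U' \<and> B1 k \<in> U' \<and> B2 k \<in> U'"
    proof -
      fix k assume "k \<in> {1..n}"
      then have "A1 k \<in> fams n A1 A2 B1 B2 \<and> A2 k \<in> fams n A1 A2 B1 B2 \<and> B1 k \<in> fams n A1 A2 B1 B2 \<and> B2 k \<in> fams n A1 A2 B1 B2"
        unfolding fams_def by auto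
      then show "A1 k \<in> U' \<and> A2 k \<in> U' \<and> B1 k \<in> U' \<and> B2 k \<in> U'" using IH3 span_base by blast
    qed
    have cross: "\<And>k X. k \<in> {1..n} \<Longrightarrow> X \<in> {a, a2, b, b2} \<Longrightarrow>
        om X (A1 k) = 0 \<and> om X (A2 k) = 0 \<and> om X (B1 k) = 0 \<and> om X (B2 k) = 0 \<and>
        om (A1 k) X = 0 \<and> om (A2 k) X = 0 \<and> om (B1 k) X = 0 \<and> om (B2 k) X = 0"
    proof -
      fix k X assume k: "k \<in> {1..n}" and X: "X \<in> {a, a2, b, b2}"
      have h: "\<And>u. u \<in> U' \<Longrightarrow> om X u = 0 \<and> om u X = 0"
      proof -
        fix u assume "u \<in> U'"
        then have "om X u = 0" using X unfolding U'_def by auto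
        then show "om X u = 0 \<and> om u X = 0" using antisym[of u X] by simp
      qed
      show "om X (A1 k) = 0 \<and> om X (A2 k) = 0 \<and> om X (B1 k) = 0 \<and> om X (B2 k) = 0 \<and>
        om (A1 k) X = 0 \<and> om (A2 k) X = 0 \<and> om (B1 k) X = 0 \<and> om (B2 k) X = 0"
        using h oldU'[OF k] by blast
    qed
    show ?thesis
    proof (intro exI conjI)
      show "\<forall>k\<in>{1..Suc n}. A1' k \<in> U \<and> B1' k \<in> U \<and> A2' k = I (A1' k) \<and> B2' k = - I (B1' k)"
        unfolding rng using IH1 old new a bU U'U by (auto simp: a2_def b2_def)
      show "gram (Suc n) A1' A2' B1' B2'"
        unfolding gram_def
      proof (intro ballI)
        fix k l assume k: "k \<in> {1..Suc n}" and l: "l \<in> {1..Suc n}"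
        show "om (A1' k) (A1' l) = 0 \<and> om (A1' k) (A2' l) = 0 \<and> om (A2' k) (A1' l) = 0 \<and> om (A2' k) (A2' l) = 0 \<and>
          om (B1' k) (B1' l) = 0 \<and> om (B1' k) (B2' l) = 0 \<and> om (B2' k) (B1' l) = 0 \<and> om (B2' k) (B2' l) = 0 \<and>
          om (B1' k) (A1' l) = 0 \<and> om (B1' k) (A2' l) = (if k = l then -1 else 0) \<and>
          om (B2' k) (A1' l) = (if k = l then 1 else 0) \<and> om (B2' k) (A2' l) = 0"
        proof (cases "k = Suc n")
          case True
          then show ?thesis
          proof (cases "l = Suc n")
            case True
            then show ?thesis using \<open>k = Suc n\<close> new vals by simp
          next
            case False
            then have l': "l \<in> {1..n}" using l by auto
            then show ?thesis using \<open>k = Suc n\<close> new old[OF l'] cross[OF l'] False by simp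
          qed
        next
          case False
          then have k': "k \<in> {1..n}" using k by auto
          show ?thesis
          proof (cases "l = Suc n")
            case True
            then show ?thesis using k' new old[OF k'] cross[OF k'] False by simp
          next
            case False
            then have l': "l \<in> {1..n}" using l by auto
            then show ?thesis using k' old[OF k'] old[OF l'] IH2 unfolding gram_def by simp
          qed
        qed
      qed
      show "span (fams (Suc n) A1' A2' B1' B2') = U"
      proof
        show "span (fams (Suc n) A1' A2' B1' B2') \<subseteq> U"
          unfolding famsN using span_minimal[OF _ subU] a a2U bU b2U IH3 span_superset[of "fams n A1 A2 B1 B2"] U'U
          by (metis (no_types, lifting) insert_subset order.trans)
        show "U \<subseteq> span (fams (Suc n) A1' A2' B1' B2')"
        proof
          fix u assume "u \<in> U"
          then obtain u' c1 c2 c3 c4 where u': "u' \<in> U'" and ueq: "u = u' + c1 *\<^sub>R a + c2 *\<^sub>R a2 + c3 *\<^sub>R b + c4 *\<^sub>R b2"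
            using decomp by blast
          let ?S = "fams (Suc n) A1' A2' B1' B2'"
          have "u' \<in> span ?S" using u' IH3 span_mono[of "fams n A1 A2 B1 B2" ?S] unfolding famsN by auto
          moreover have "a \<in> span ?S" "a2 \<in> span ?S" "b \<in> span ?S" "b2 \<in> span ?S"
            unfolding famsN by (auto intro: span_base)
          ultimately show "u \<in> span ?S" unfolding ueq
            by (intro span_add span_scale) auto
        qed
      qed
    qed
  qed
qed

end



locale tri3 =
  fixes F :: "'w::real_vector \<Rightarrow> 'w \<Rightarrow> 'w \<Rightarrow> real"
  assumes tri: "trilinear F" and alt: "alternating3 F"
begin

lemma l1: "linear (\<lambda>x. F x y z)" using tri unfolding trilinear_def by auto
lemma l2: "linear (\<lambda>y. F x y z)" using tri unfolding trilinear_def by auto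
lemma l3: "linear (\<lambda>z. F x y z)" using tri unfolding trilinear_def by auto

lemma add1 [simp]: "F (a + b) y z = F a y z + F b y z" using linear_add[OF l1] by simp
lemma add2 [simp]: "F x (a + b) z = F x a z + F x b z" using linear_add[OF l2] by simp
lemma add3 [simp]: "F x y (a + b) = F x y a + F x y b" using linear_add[OF l3] by simp
lemma sc1 [simp]: "F (c *\<^sub>R a) y z = c * F a y z" using linear_scale[OF l1] by simp
lemma sc2 [simp]: "F x (c *\<^sub>R a) z = c * F x a z" using linear_scale[OF l2] by simp
lemma sc3 [simp]: "F x y (c *\<^sub>R a) = c * F x y a" using linear_scale[OF l3] by simp
lemma neg1 [simp]: "F (- a) y z = - F a y z" using linear_neg[OF l1] by simp
lemma neg2 [simp]: "F x (- a) z = - F x a z" using linear_neg[OF l2] by simp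
lemma neg3 [simp]: "F x y (- a) = - F x y a" using linear_neg[OF l3] by simp
lemma diff1 [simp]: "F (a - b) y z = F a y z - F b y z" using linear_diff[OF l1] by simp
lemma diff2 [simp]: "F x (a - b) z = F x a z - F x b z" using linear_diff[OF l2] by simp
lemma diff3 [simp]: "F x y (a - b) = F x y a - F x y b" using linear_diff[OF l3] by simp
lemma z1 [simp]: "F 0 y z = 0" using linear_0[OF l1] by simp
lemma z2 [simp]: "F x 0 z = 0" using linear_0[OF l2] by simp
lemma z3 [simp]: "F x y 0 = 0" using linear_0[OF l3] by simp

lemma alt12 [simp]: "F x x z = 0" using alt unfolding alternating3_def by auto
lemma alt23 [simp]: "F x y y = 0" using alt unfolding alternating3_def by auto
lemma alt13 [simp]: "F x y x = 0" using alt unfolding alternating3_def by auto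

lemma sw12: "F a b c = - F b a c"
proof -
  have "F a b c + F b a c = 0" using alt12[of "a+b" c] unfolding add1 add2 by simp
  then show ?thesis by linarith
qed
lemma sw23: "F a b c = - F a c b"
proof -
  have "F a b c + F a c b = 0" using alt23[of a "b+c"] unfolding add2 add3 by simp
  then show ?thesis by linarith
qed
lemma sw13: "F a b c = - F c b a"
proof -
  have "F a b c + F c b a = 0" using alt13[of "a+c" b] unfolding add1 add3 by simp
  then show ?thesis by linarith
qed

lemma decomp3:
  assumes h0: "F x' y' z' = 0"
  shows "F (x1 *\<^sub>R e1 + x2 *\<^sub>R e2 + x') (y1 *\<^sub>R e1 + y2 *\<^sub>R e2 + y') (z1 *\<^sub>R e1 + z2 *\<^sub>R e2 + z') =
    x1 * F e1 y' z' - y1 * F e1 x' z' + z1 * F e1 x' y' + x2 * F e2 y' z' - y2 * F e2 x' z' + z2 * F e2 x' y'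
    + (x1*y2 - x2*y1) * F e1 e2 z' - (x1*z2 - x2*z1) * F e1 e2 y' + (y1*z2 - y2*z1) * F e1 e2 x'"
proof -
  have r1: "F x' e1 z' = - F e1 x' z'" using sw12[of x' e1 z'] .
  have r2: "F x' e2 z' = - F e2 x' z'" using sw12[of x' e2 z'] .
  have r3: "F x' y' e1 = F e1 x' y'" using sw13[of x' y' e1] sw23[of e1 y' x'] by simp
  have r4: "F x' y' e2 = F e2 x' y'" using sw13[of x' y' e2] sw23[of e2 y' x'] by simp
  have r5: "F e2 e1 z' = - F e1 e2 z'" using sw12[of e2 e1 z'] .
  have r6: "F e1 y' e2 = - F e1 e2 y'" using sw23[of e1 y' e2] .
  have r7: "F e2 y' e1 = F e1 e2 y'" using sw13[of e2 y' e1] sw23[of e1 y' e2] by simp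
  have r8: "F x' e1 e2 = F e1 e2 x'" using sw12[of x' e1 e2] sw23[of e1 x' e2] by simp
  have r9: "F x' e2 e1 = - F e1 e2 x'" using sw13[of x' e2 e1] .
  note r = r1 r2 r3 r4 r5 r6 r7 r8 r9
  show ?thesis by (simp add: r h0 distrib_left distrib_right right_diff_distrib left_diff_distrib)
qed

end

lemma wedge3_regroup: "wedge3 a b c x y z =
   c z * (a x * b y - a y * b x) - c y * (a x * b z - a z * b x) + c x * (a y * b z - a z * b y)"
  unfolding wedge3_def by (simp add: algebra_simps)

lemma bil_eq:
  assumes f1: "\<And>v. linear (\<lambda>u. f u v)" and f2: "\<And>u. linear (\<lambda>v. f u v)"
    and g1: "\<And>v. linear (\<lambda>u. g u v)" and g2: "\<And>u. linear (\<lambda>v. g u v)"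
    and eq: "\<forall>a\<in>S. \<forall>b\<in>S. f a b = (g a b :: real)"
    and u: "u \<in> span S" and v: "v \<in> span S"
  shows "f u v = g u v"
proof -
  have "\<And>b. b \<in> S \<Longrightarrow> f u b = g u b"
  proof -
    fix b assume b: "b \<in> S"
    show "f u b = g u b"
      by (rule linear_eq_on[OF f1 g1 u]) (use eq b in auto)
  qed
  then show ?thesis by (rule linear_eq_on[OF f2 g2 v])
qed



lemma dim2_span:
  fixes x y :: "'t::real_vector"
  assumes d: "dim (UNIV :: 't set) = 2" and ind: "independent {x, y}" and xy: "x \<noteq> y"
  shows "span {x, y} = UNIV"
proof (rule ccontr)
  assume "span {x, y} \<noteq> UNIV"
  then obtain s where s: "s \<notin> span {x, y}" by auto
  obtain C :: "'t set" where C: "independent C" "UNIV \<subseteq> span C" "card C = dim (UNIV :: 't set)"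
    using basis_exists[of "UNIV :: 't set"] by blast
  have fC: "finite C" using C(3) d by (metis card.infinite zero_neq_numeral)
  have ind3: "independent (insert s {x, y})" using independent_insertI[OF s ind] .
  have "insert s {x, y} \<subseteq> span C" using C(2) by blast
  then have le: "card (insert s {x, y}) \<le> card C" using independent_span_bound[OF fC ind3] by blast
  have "x \<in> span {x, y}" "y \<in> span {x, y}" by (simp_all add: span_base)
  then have "s \<noteq> x" "s \<noteq> y" using s by auto
  then have "card (insert s {x, y}) = 3" using xy by simp
  then show False using le C(3) d by simp
qed




lemma bidx_mem [simp]:
  "Ie1 \<in> bidx_set n" "Ie2 \<in> bidx_set n"
  "Ia1 k \<in> bidx_set n \<longleftrightarrow> 1 \<le> k \<and> k \<le> n" "Ia2 k \<in> bidx_set n \<longleftrightarrow> 1 \<le> k \<and> k \<le> n"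
  "Ib1 k \<in> bidx_set n \<longleftrightarrow> 1 \<le> k \<and> k \<le> n" "Ib2 k \<in> bidx_set n \<longleftrightarrow> 1 \<le> k \<and> k \<le> n"
  by (auto simp: bidx_set_def)

lemma bidx_V: "bidx_set n - {Ie1, Ie2} = Ia1 ` {1..n} \<union> (Ia2 ` {1..n} \<union> (Ib1 ` {1..n} \<union> Ib2 ` {1..n}))"
  by (auto simp: bidx_set_def)

lemma card_bidx_V: "card (bidx_set n - {Ie1, Ie2}) = 4 * n"
proof -
  have c: "card (C ` {1..n}) = n" if "inj C" for C :: "nat \<Rightarrow> bidx"
    using that by (simp add: card_image inj_on_def inj_def)
  have i: "inj Ia1" "inj Ia2" "inj Ib1" "inj Ib2" by (auto simp: inj_def)
  have "card (Ia1 ` {1..n} \<union> (Ia2 ` {1..n} \<union> (Ib1 ` {1..n} \<union> Ib2 ` {1..n}))) =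
        card (Ia1 ` {1..n}) + (card (Ia2 ` {1..n}) + (card (Ib1 ` {1..n}) + card (Ib2 ` {1..n})))"
    by (subst card_Un_disjoint, auto)+
  then show ?thesis unfolding bidx_V using c i by simp
qed

lemma if10_mult [simp]: "(if P then (1::real) else 0) * (if Q then 1 else 0) = (if P \<and> Q then 1 else 0)"
  by simp

lemma sum_kron: "finite A \<Longrightarrow> (\<Sum>m\<in>A. if m = k \<and> m = l then (1::real) else 0) = (if k = l \<and> k \<in> A then 1 else 0)"
proof (cases "k = l")
  case True
  assume "finite A"
  then show ?thesis using True by (simp add: sum.delta)
next
  case False
  have "(\<Sum>m\<in>A. if m = k \<and> m = l then (1::real) else 0) = (\<Sum>m\<in>A. 0)"
    by (rule sum.cong) (use False in auto)
  then show ?thesis using False by simp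
qed

theorem mainTheorem5:
  fixes I :: "'w::real_vector \<Rightarrow> 'w" and j :: "'t::real_vector \<Rightarrow> 't"
    and \<sigma> :: "'w \<Rightarrow> 't" and V :: "'w set"
    and \<Omega> :: "'w \<Rightarrow> 'w \<Rightarrow> 'w \<Rightarrow> real"
  assumes cxI: "complex_structure I" and cxj: "complex_structure j"
    and finW: "\<exists>S. finite S \<and> span S = (UNIV :: 'w set)"
    and lin_sigma: "linear \<sigma>" and cx_sigma: "\<forall>x. \<sigma> (I x) = j (\<sigma> x)"
    and surj_sigma: "surj \<sigma>"
    and V_ker: "V = {x. \<sigma> x = 0}"
    and dimT: "dim (UNIV :: 't set) = 2"
    and tri: "trilinear \<Omega>" and alt: "alternating3 \<Omega>"
    and i: "\<forall>v1\<in>V. \<forall>v2\<in>V. \<forall>v3\<in>V. \<Omega> v1 v2 v3 = 0"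
    and ii: "\<forall>\<xi>. \<sigma> \<xi> \<noteq> 0 \<longrightarrow> (\<forall>v1\<in>V. (\<forall>v2\<in>V. \<Omega> \<xi> v1 v2 = 0) \<longrightarrow> v1 = 0)"
    and iii: "\<forall>\<xi>. \<forall>v1\<in>V. \<forall>v2\<in>V. \<Omega> (I \<xi>) v1 v2 = - \<Omega> \<xi> v1 (I v2)"
  shows "\<exists>n::nat. dim V = 4 * n \<and>
    (\<exists>(B :: bidx \<Rightarrow> 'w) (d :: bidx \<Rightarrow> 'w \<Rightarrow> real) (\<nu> :: 'w \<Rightarrow> real).
       is_basis_family B (bidx_set n) \<and>
       is_dual_family B d (bidx_set n) \<and>
       span {\<sigma> (B Ie1), \<sigma> (B Ie2)} = UNIV \<and>
       V = span (B ` (bidx_set n - {Ie1, Ie2})) \<and>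
       I (B Ie1) = B Ie2 \<and>
       (\<forall>k\<in>{1..n}. I (B (Ia1 k)) = B (Ia2 k) \<and> I (B (Ib1 k)) = - B (Ib2 k)) \<and>
       linear \<nu> \<and> \<nu> (B Ie1) = 0 \<and> \<nu> (B Ie2) = 0 \<and>
       (\<forall>x y z. \<Omega> x y z =
          (\<Sum>k=1..n.
              wedge3 (d (Ib1 k)) (d (Ia1 k)) (d Ie2) x y z
            + wedge3 (d (Ib2 k)) (d (Ia2 k)) (d Ie2) x y z
            - wedge3 (d (Ib1 k)) (d (Ia2 k)) (d Ie1) x y z
            + wedge3 (d (Ib2 k)) (d (Ia1 k)) (d Ie1) x y z)
          + wedge3 \<nu> (d Ie1) (d Ie2) x y z))"
proof -
  have linI: "linear I" and II: "\<And>x. I (I x) = - x" using cxI unfolding complex_structure_def by auto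
  have linj: "linear j" and jj: "\<And>x. j (j x) = - x" using cxj unfolding complex_structure_def by auto
  interpret O: tri3 \<Omega> using tri alt by unfold_locales
  have "\<exists>t::'t. t \<noteq> 0"
  proof (rule ccontr)
    assume "\<not> (\<exists>t::'t. t \<noteq> 0)"
    then have "(UNIV::'t set) = span {}" by auto
    then have "dim (UNIV::'t set) = dim (span ({}::'t set))" by simp
    also have "\<dots> = 0" by (simp only: dim_span dim_eq_card_independent[OF independent_empty]) simp
    finally show False using dimT by simp
  qed
  then obtain t :: 't where t0: "t \<noteq> 0" by blast
  obtain e1 where se1: "\<sigma> e1 = t" using surj_sigma by (metis surjD)
  define e2 where "e2 = I e1"
  have se2: "\<sigma> e2 = j t" using cx_sigma se1 by (simp add: e2_def)
  have jt_notin: "j t \<notin> span {t}"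
  proof
    assume "j t \<in> span {t}"
    then obtain c where c: "j t = c *\<^sub>R t" by (auto simp: span_singleton)
    have "j (j t) = (c * c) *\<^sub>R t" using c linear_scale[OF linj, of c t] by simp
    then have "- t = (c * c) *\<^sub>R t" using jj by simp
    then have "(c * c + 1) *\<^sub>R t = 0" by (metis add.commute add.right_inverse scaleR_add_left scaleR_one)
    moreover have "c * c + 1 \<noteq> 0" using zero_le_square[of c] by linarith
    ultimately show False using t0 by simp
  qed
  have "t \<notin> span {}" using t0 by simp
  then have "independent {t}" using independent_insertI[of t "{}"] by simp
  then have ind: "independent {j t, t}" using independent_insertI[OF jt_notin] by simp
  have tjt: "t \<noteq> j t" using jt_notin span_base[of t "{t}"] by auto
  have spT: "span {t, j t} = UNIV" using dim2_span[OF dimT _ tjt] ind by (simp add: insert_commute)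
  obtain g1 :: "'t \<Rightarrow> real" where g1: "linear g1" "g1 t = 1" "g1 (j t) = 0"
    using linear_independent_extend[OF ind, of "\<lambda>x. if x = t then 1 else 0"] tjt by auto
  obtain g2 :: "'t \<Rightarrow> real" where g2: "linear g2" "g2 t = 0" "g2 (j t) = 1"
    using linear_independent_extend[OF ind, of "\<lambda>x. if x = t then 0 else 1"] tjt by auto
  have coord: "\<And>s. g1 s *\<^sub>R t + g2 s *\<^sub>R j t = s"
  proof -
    fix s :: 't
    have "s \<in> span (insert t {j t})" using spT by simp
    then obtain c where "s - c *\<^sub>R t \<in> span {j t}" using span_breakdown_eq by blast
    then obtain dd where "s - c *\<^sub>R t = dd *\<^sub>R j t" by (auto simp: span_singleton)
    then have s: "s = c *\<^sub>R t + dd *\<^sub>R j t" by (simp add: algebra_simps)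
    have "g1 s = c" "g2 s = dd" using g1 g2 by (simp_all add: s linear_add linear_scale)
    then show "g1 s *\<^sub>R t + g2 s *\<^sub>R j t = s" using s by simp
  qed
  define \<epsilon>1 where "\<epsilon>1 = (\<lambda>x. g1 (\<sigma> x))"
  define \<epsilon>2 where "\<epsilon>2 = (\<lambda>x. g2 (\<sigma> x))"
  have lin_e1: "linear \<epsilon>1" using linear_compose[OF lin_sigma g1(1)] by (simp add: \<epsilon>1_def o_def)
  have lin_e2: "linear \<epsilon>2" using linear_compose[OF lin_sigma g2(1)] by (simp add: \<epsilon>2_def o_def)
  have sV: "subspace V" unfolding V_ker subspace_def
    by (auto simp: linear_0[OF lin_sigma] linear_add[OF lin_sigma] linear_scale[OF lin_sigma])
  have IV: "\<And>v. v \<in> V \<Longrightarrow> I v \<in> V" using cx_sigma V_ker linear_0[OF linj] by auto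
  have \<epsilon>_e: "\<epsilon>1 e1 = 1" "\<epsilon>1 e2 = 0" "\<epsilon>2 e1 = 0" "\<epsilon>2 e2 = 1"
    using g1 g2 se1 se2 by (simp_all add: \<epsilon>1_def \<epsilon>2_def)
  have \<epsilon>V1: "\<And>v. v \<in> V \<Longrightarrow> \<epsilon>1 v = 0" using V_ker linear_0[OF g1(1)] by (simp add: \<epsilon>1_def)
  have \<epsilon>V2: "\<And>v. v \<in> V \<Longrightarrow> \<epsilon>2 v = 0" using V_ker linear_0[OF g2(1)] by (simp add: \<epsilon>2_def)
  define q where "q = (\<lambda>x. x - \<epsilon>1 x *\<^sub>R e1 - \<epsilon>2 x *\<^sub>R e2)"
  have qV: "\<And>x. q x \<in> V"
  proof -
    fix x
    have "\<sigma> (q x) = \<sigma> x - \<epsilon>1 x *\<^sub>R \<sigma> e1 - \<epsilon>2 x *\<^sub>R \<sigma> e2"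
      unfolding q_def linear_diff[OF lin_sigma] linear_scale[OF lin_sigma] by (rule refl)
    also have "\<dots> = \<sigma> x - (g1 (\<sigma> x) *\<^sub>R t + g2 (\<sigma> x) *\<^sub>R j t)"
      by (simp only: se1 se2 \<epsilon>1_def \<epsilon>2_def diff_diff_eq)
    also have "\<dots> = 0" by (simp only: coord diff_self)
    finally show "q x \<in> V" unfolding V_ker by simp
  qed
  have qv: "\<And>v. v \<in> V \<Longrightarrow> q v = v" using \<epsilon>V1 \<epsilon>V2 by (simp add: q_def)
  have qe: "q e1 = 0" "q e2 = 0" by (simp_all add: q_def \<epsilon>_e)
  have lin_q: "linear q"
    by (rule linearI) (simp_all add: q_def linear_add[OF lin_e1] linear_add[OF lin_e2]
        linear_scale[OF lin_e1] linear_scale[OF lin_e2] algebra_simps)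
  have xq: "\<And>x. \<epsilon>1 x *\<^sub>R e1 + \<epsilon>2 x *\<^sub>R e2 + q x = x" by (simp add: q_def)
  define om where "om = (\<lambda>x y. \<Omega> e1 x y)"
  have symI: "\<And>x y. x \<in> V \<Longrightarrow> y \<in> V \<Longrightarrow> om (I x) y = om x (I y)"
  proof -
    fix x y assume x: "x \<in> V" and y: "y \<in> V"
    have A: "\<Omega> (I e1) y x = - \<Omega> e1 y (I x)" using iii x y by blast
    have B: "\<Omega> (I e1) x y = - \<Omega> e1 x (I y)" using iii x y by blast
    have C: "\<Omega> (I e1) y x = - \<Omega> (I e1) x y" by (rule O.sw23)
    have D: "\<Omega> e1 y (I x) = - \<Omega> e1 (I x) y" by (rule O.sw23)
    show "om (I x) y = om x (I y)" unfolding om_def using A B C D by linarith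
  qed
  have l2': "\<And>y. linear (\<lambda>x. om x y)" unfolding om_def by (rule O.l2)
  have l3': "\<And>x. linear (om x)" unfolding om_def by (rule O.l3)
  have alt': "\<And>x. om x x = 0" unfolding om_def by simp
  interpret SY: sympl I om V by (rule sympl.intro[OF linI II l2' l3' alt' finW sV IV symI])
  have ndV: "\<forall>u\<in>V. (\<forall>w\<in>V. om u w = 0) \<longrightarrow> u = 0" using ii se1 t0 unfolding om_def by blast
  obtain n a1 a2 b1 b2 where
    C1: "\<forall>k\<in>{1..n}. a1 k \<in> V \<and> b1 k \<in> V \<and> a2 k = I (a1 k) \<and> b2 k = - I (b1 k)"
    and C2: "SY.gram n a1 a2 b1 b2" and C3: "span (SY.fams n a1 a2 b1 b2) = V"
    using SY.construct[OF sV subset_refl] IV ndV by blast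
  have inV1: "\<And>k. k \<in> {1..n} \<Longrightarrow> a1 k \<in> V" using C1 by auto
  have inV3: "\<And>k. k \<in> {1..n} \<Longrightarrow> b1 k \<in> V" using C1 by auto
  have inV2: "\<And>k. k \<in> {1..n} \<Longrightarrow> a2 k \<in> V" using C1 IV by auto
  have inV4: "\<And>k. k \<in> {1..n} \<Longrightarrow> b2 k \<in> V" using C1 IV subspace_neg[OF sV] by auto
  have Ia1: "\<And>k. k \<in> {1..n} \<Longrightarrow> I (a1 k) = a2 k" using C1 by auto
  have Ia2: "\<And>k. k \<in> {1..n} \<Longrightarrow> I (a2 k) = - a1 k" using C1 II by auto
  have Ib1: "\<And>k. k \<in> {1..n} \<Longrightarrow> I (b1 k) = - b2 k" using C1 by auto
  have Ib2: "\<And>k. k \<in> {1..n} \<Longrightarrow> I (b2 k) = b1 k" using C1 II by auto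
  have G: "\<And>k l. k \<in> {1..n} \<Longrightarrow> l \<in> {1..n} \<Longrightarrow>
    om (a1 k) (a1 l) = 0 \<and> om (a1 k) (a2 l) = 0 \<and> om (a2 k) (a1 l) = 0 \<and> om (a2 k) (a2 l) = 0 \<and>
    om (b1 k) (b1 l) = 0 \<and> om (b1 k) (b2 l) = 0 \<and> om (b2 k) (b1 l) = 0 \<and> om (b2 k) (b2 l) = 0 \<and>
    om (b1 k) (a1 l) = 0 \<and> om (b1 k) (a2 l) = (if k = l then -1 else 0) \<and>
    om (b2 k) (a1 l) = (if k = l then 1 else 0) \<and> om (b2 k) (a2 l) = 0 \<and>
    om (a1 k) (b1 l) = 0 \<and> om (a2 k) (b1 l) = (if k = l then 1 else 0) \<and>
    om (a1 k) (b2 l) = (if k = l then -1 else 0) \<and> om (a2 k) (b2 l) = 0"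
  proof -
    fix k l assume k: "k \<in> {1..n}" and l: "l \<in> {1..n}"
    have g1: "om (a1 k) (a1 l) = 0 \<and> om (a1 k) (a2 l) = 0 \<and> om (a2 k) (a1 l) = 0 \<and> om (a2 k) (a2 l) = 0 \<and>
    om (b1 k) (b1 l) = 0 \<and> om (b1 k) (b2 l) = 0 \<and> om (b2 k) (b1 l) = 0 \<and> om (b2 k) (b2 l) = 0 \<and>
    om (b1 k) (a1 l) = 0 \<and> om (b1 k) (a2 l) = (if k = l then -1 else 0) \<and>
    om (b2 k) (a1 l) = (if k = l then 1 else 0) \<and> om (b2 k) (a2 l) = 0"
      using C2 k l unfolding SY.gram_def by blast
    have g2: "om (b1 l) (a1 k) = 0" "om (b1 l) (a2 k) = (if l = k then -1 else 0)"
       "om (b2 l) (a1 k) = (if l = k then 1 else 0)" "om (b2 l) (a2 k) = 0"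
      using C2 k l unfolding SY.gram_def by blast+
    have g3: "om (a1 k) (b1 l) = 0" using SY.antisym[of "a1 k" "b1 l"] g2(1) by simp
    have g4: "om (a2 k) (b1 l) = (if k = l then 1 else 0)" using SY.antisym[of "a2 k" "b1 l"] g2(2) by auto
    have g5: "om (a1 k) (b2 l) = (if k = l then -1 else 0)" using SY.antisym[of "a1 k" "b2 l"] g2(3) by auto
    have g6: "om (a2 k) (b2 l) = 0" using SY.antisym[of "a2 k" "b2 l"] g2(4) by simp
    show "om (a1 k) (a1 l) = 0 \<and> om (a1 k) (a2 l) = 0 \<and> om (a2 k) (a1 l) = 0 \<and> om (a2 k) (a2 l) = 0 \<and>
    om (b1 k) (b1 l) = 0 \<and> om (b1 k) (b2 l) = 0 \<and> om (b2 k) (b1 l) = 0 \<and> om (b2 k) (b2 l) = 0 \<and>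
    om (b1 k) (a1 l) = 0 \<and> om (b1 k) (a2 l) = (if k = l then -1 else 0) \<and>
    om (b2 k) (a1 l) = (if k = l then 1 else 0) \<and> om (b2 k) (a2 l) = 0 \<and>
    om (a1 k) (b1 l) = 0 \<and> om (a2 k) (b1 l) = (if k = l then 1 else 0) \<and>
    om (a1 k) (b2 l) = (if k = l then -1 else 0) \<and> om (a2 k) (b2 l) = 0"
      using g1 g3 g4 g5 g6 by simp
  qed
  have Gs: "\<And>k l. k \<in> {1..n} \<Longrightarrow> l \<in> {1..n} \<Longrightarrow> om (a1 k) (a1 l) = 0"
    "\<And>k l. k \<in> {1..n} \<Longrightarrow> l \<in> {1..n} \<Longrightarrow> om (a1 k) (a2 l) = 0"
    "\<And>k l. k \<in> {1..n} \<Longrightarrow> l \<in> {1..n} \<Longrightarrow> om (a2 k) (a1 l) = 0"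
    "\<And>k l. k \<in> {1..n} \<Longrightarrow> l \<in> {1..n} \<Longrightarrow> om (a2 k) (a2 l) = 0"
    "\<And>k l. k \<in> {1..n} \<Longrightarrow> l \<in> {1..n} \<Longrightarrow> om (b1 k) (b1 l) = 0"
    "\<And>k l. k \<in> {1..n} \<Longrightarrow> l \<in> {1..n} \<Longrightarrow> om (b1 k) (b2 l) = 0"
    "\<And>k l. k \<in> {1..n} \<Longrightarrow> l \<in> {1..n} \<Longrightarrow> om (b2 k) (b1 l) = 0"
    "\<And>k l. k \<in> {1..n} \<Longrightarrow> l \<in> {1..n} \<Longrightarrow> om (b2 k) (b2 l) = 0"
    "\<And>k l. k \<in> {1..n} \<Longrightarrow> l \<in> {1..n} \<Longrightarrow> om (b1 k) (a1 l) = 0"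
    "\<And>k l. k \<in> {1..n} \<Longrightarrow> l \<in> {1..n} \<Longrightarrow> om (b1 k) (a2 l) = (if k = l then -1 else 0)"
    "\<And>k l. k \<in> {1..n} \<Longrightarrow> l \<in> {1..n} \<Longrightarrow> om (b2 k) (a1 l) = (if k = l then 1 else 0)"
    "\<And>k l. k \<in> {1..n} \<Longrightarrow> l \<in> {1..n} \<Longrightarrow> om (b2 k) (a2 l) = 0"
    "\<And>k l. k \<in> {1..n} \<Longrightarrow> l \<in> {1..n} \<Longrightarrow> om (a1 k) (b1 l) = 0"
    "\<And>k l. k \<in> {1..n} \<Longrightarrow> l \<in> {1..n} \<Longrightarrow> om (a2 k) (b1 l) = (if k = l then 1 else 0)"
    "\<And>k l. k \<in> {1..n} \<Longrightarrow> l \<in> {1..n} \<Longrightarrow> om (a1 k) (b2 l) = (if k = l then -1 else 0)"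
    "\<And>k l. k \<in> {1..n} \<Longrightarrow> l \<in> {1..n} \<Longrightarrow> om (a2 k) (b2 l) = 0"
    using G by blast+
  define B where "B = (\<lambda>i. case i of Ie1 \<Rightarrow> e1 | Ie2 \<Rightarrow> e2 | Ia1 k \<Rightarrow> a1 k | Ia2 k \<Rightarrow> a2 k
     | Ib1 k \<Rightarrow> b1 k | Ib2 k \<Rightarrow> b2 k)"
  define d where "d = (\<lambda>i. case i of Ie1 \<Rightarrow> \<epsilon>1 | Ie2 \<Rightarrow> \<epsilon>2
     | Ia1 k \<Rightarrow> (\<lambda>x. om (b2 k) (q x)) | Ia2 k \<Rightarrow> (\<lambda>x. - om (b1 k) (q x))
     | Ib1 k \<Rightarrow> (\<lambda>x. om (a2 k) (q x)) | Ib2 k \<Rightarrow> (\<lambda>x. - om (a1 k) (q x)))"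
  define \<nu> where "\<nu> = (\<lambda>x. \<Omega> e1 e2 x)"
  have B_simps [simp]: "B Ie1 = e1" "B Ie2 = e2" "\<And>k. B (Ia1 k) = a1 k" "\<And>k. B (Ia2 k) = a2 k"
    "\<And>k. B (Ib1 k) = b1 k" "\<And>k. B (Ib2 k) = b2 k" by (simp_all add: B_def)
  have d_simps: "d Ie1 = \<epsilon>1" "d Ie2 = \<epsilon>2" "\<And>k. d (Ia1 k) = (\<lambda>x. om (b2 k) (q x))"
    "\<And>k. d (Ia2 k) = (\<lambda>x. - om (b1 k) (q x))" "\<And>k. d (Ib1 k) = (\<lambda>x. om (a2 k) (q x))"
    "\<And>k. d (Ib2 k) = (\<lambda>x. - om (a1 k) (q x))" by (simp_all add: d_def)
  have linoq: "\<And>c. linear (\<lambda>x. om c (q x))"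
    using linear_compose[OF lin_q l3'] by (simp add: o_def)
  have linnoq: "\<And>c. linear (\<lambda>x. - om c (q x))"
  proof -
    fix c show "linear (\<lambda>x. - om c (q x))" using linoq[of "- c"] by simp
  qed
  have lin_d: "\<And>i. linear (d i)"
  proof -
    fix i show "linear (d i)" by (cases i) (simp_all add: d_simps lin_e1 lin_e2 linoq linnoq)
  qed
  have kron: "\<forall>i\<in>bidx_set n. \<forall>j\<in>bidx_set n. d i (B j) = (if i = j then 1 else 0)"
  proof (intro ballI)
    fix i j assume i: "i \<in> bidx_set n" and j: "j \<in> bidx_set n"
    show "d i (B j) = (if i = j then 1 else 0)"
      using i j by (cases i; cases j) (simp_all add: d_simps \<epsilon>_e qe qv inV1 inV2 inV3 inV4 \<epsilon>V1 \<epsilon>V2 Gs)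
  qed
  have lin_dS: "\<forall>i\<in>bidx_set n. linear (d i)" using lin_d by blast
  have bi: "inj_on B (bidx_set n) \<and> independent (B ` bidx_set n)"
    by (rule dual_imp_basis[OF lin_dS kron])
  have VB: "B ` (bidx_set n - {Ie1, Ie2}) = SY.fams n a1 a2 b1 b2"
    unfolding bidx_V SY.fams_def image_Un image_image by auto
  have spanV: "V = span (B ` (bidx_set n - {Ie1, Ie2}))" using C3 VB by simp
  have spanW: "span (B ` bidx_set n) = UNIV"
  proof -
    have "V \<subseteq> span (B ` bidx_set n)" unfolding spanV by (rule span_mono) auto
    have "\<And>x. x \<in> span (B ` bidx_set n)"
    proof -
      fix x
      have "e1 \<in> span (B ` bidx_set n)" "e2 \<in> span (B ` bidx_set n)"
        using span_base[of e1 "B ` bidx_set n"] span_base[of e2 "B ` bidx_set n"]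
          image_eqI[of e1 B Ie1] image_eqI[of e2 B Ie2] by auto
      moreover have "q x \<in> span (B ` bidx_set n)" using qV \<open>V \<subseteq> span (B ` bidx_set n)\<close> by auto
      ultimately have "\<epsilon>1 x *\<^sub>R e1 + \<epsilon>2 x *\<^sub>R e2 + q x \<in> span (B ` bidx_set n)"
        by (intro span_add span_scale)
      then show "x \<in> span (B ` bidx_set n)" by (simp only: xq)
    qed
    then show ?thesis by auto
  qed
  have basis: "is_basis_family B (bidx_set n)" unfolding is_basis_family_def using bi spanW by blast
  have dual: "is_dual_family B d (bidx_set n)" unfolding is_dual_family_def using lin_dS kron by blast
  have dimV: "dim V = 4 * n"
  proof -
    have sub: "bidx_set n - {Ie1, Ie2} \<subseteq> bidx_set n" by auto
    have indV: "independent (B ` (bidx_set n - {Ie1, Ie2}))"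
      using bi independent_mono[of "B ` bidx_set n"] sub by blast
    have "card (B ` (bidx_set n - {Ie1, Ie2})) = card (bidx_set n - {Ie1, Ie2})"
      using bi inj_on_subset[OF _ sub] card_image by blast
    then show ?thesis unfolding spanV dim_span_eq_card_independent[OF indV] card_bidx_V .
  qed
  have spanT': "span {\<sigma> (B Ie1), \<sigma> (B Ie2)} = UNIV" using spT se1 se2 by simp
  have Irel1: "I (B Ie1) = B Ie2" by (simp add: e2_def)
  have Irel2: "\<forall>k\<in>{1..n}. I (B (Ia1 k)) = B (Ia2 k) \<and> I (B (Ib1 k)) = - B (Ib2 k)"
    using Ia1 Ib1 by simp
  have lin_nu: "linear \<nu>" unfolding \<nu>_def by (rule O.l3)
  have nu0: "\<nu> (B Ie1) = 0" "\<nu> (B Ie2) = 0" by (simp_all add: \<nu>_def)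
  define \<Phi>1 where "\<Phi>1 = (\<lambda>y z. \<Sum>k=1..n. (- (d (Ib1 k) y * d (Ia2 k) z - d (Ib1 k) z * d (Ia2 k) y) + (d (Ib2 k) y * d (Ia1 k) z - d (Ib2 k) z * d (Ia1 k) y)))"
  define \<Phi>2 where "\<Phi>2 = (\<lambda>y z. \<Sum>k=1..n. ((d (Ib1 k) y * d (Ia1 k) z - d (Ib1 k) z * d (Ia1 k) y) + (d (Ib2 k) y * d (Ia2 k) z - d (Ib2 k) z * d (Ia2 k) y)))"
  have dadd: "\<And>i x y. d i (x + y) = d i x + d i y" using linear_add[OF lin_d] by blast
  have dsc: "\<And>i c x. d i (c *\<^sub>R x) = c * d i x" using linear_scale[OF lin_d] by simp
  have linP11: "\<And>z. linear (\<lambda>y. \<Phi>1 y z)"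
  proof (rule linearI)
    fix z u v show "\<Phi>1 (u + v) z = \<Phi>1 u z + \<Phi>1 v z"
      unfolding \<Phi>1_def sum.distrib[symmetric] by (rule sum.cong) (simp_all add: dadd algebra_simps)
  next
    fix z c u show "\<Phi>1 (c *\<^sub>R u) z = c *\<^sub>R \<Phi>1 u z"
      unfolding \<Phi>1_def real_scaleR_def sum_distrib_left by (rule sum.cong) (simp_all add: dsc algebra_simps)
  qed
  have linP12: "\<And>y. linear (\<lambda>z. \<Phi>1 y z)"
  proof (rule linearI)
    fix y u v show "\<Phi>1 y (u + v) = \<Phi>1 y u + \<Phi>1 y v"
      unfolding \<Phi>1_def sum.distrib[symmetric] by (rule sum.cong) (simp_all add: dadd algebra_simps)
  next
    fix y c u show "\<Phi>1 y (c *\<^sub>R u) = c *\<^sub>R \<Phi>1 y u"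
      unfolding \<Phi>1_def real_scaleR_def sum_distrib_left by (rule sum.cong) (simp_all add: dsc algebra_simps)
  qed
  have linP21: "\<And>z. linear (\<lambda>y. \<Phi>2 y z)"
  proof (rule linearI)
    fix z u v show "\<Phi>2 (u + v) z = \<Phi>2 u z + \<Phi>2 v z"
      unfolding \<Phi>2_def sum.distrib[symmetric] by (rule sum.cong) (simp_all add: dadd algebra_simps)
  next
    fix z c u show "\<Phi>2 (c *\<^sub>R u) z = c *\<^sub>R \<Phi>2 u z"
      unfolding \<Phi>2_def real_scaleR_def sum_distrib_left by (rule sum.cong) (simp_all add: dsc algebra_simps)
  qed
  have linP22: "\<And>y. linear (\<lambda>z. \<Phi>2 y z)"
  proof (rule linearI)
    fix y u v show "\<Phi>2 y (u + v) = \<Phi>2 y u + \<Phi>2 y v"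
      unfolding \<Phi>2_def sum.distrib[symmetric] by (rule sum.cong) (simp_all add: dadd algebra_simps)
  next
    fix y c u show "\<Phi>2 y (c *\<^sub>R u) = c *\<^sub>R \<Phi>2 y u"
      unfolding \<Phi>2_def real_scaleR_def sum_distrib_left by (rule sum.cong) (simp_all add: dsc algebra_simps)
  qed
  have dv_a1: "\<And>i k. i \<in> bidx_set n \<Longrightarrow> k \<in> {1..n} \<Longrightarrow> d i (a1 k) = (if i = Ia1 k then 1 else 0)"
    using kron by (metis B_simps bidx_mem(3) atLeastAtMost_iff)
  have dv_a2: "\<And>i k. i \<in> bidx_set n \<Longrightarrow> k \<in> {1..n} \<Longrightarrow> d i (a2 k) = (if i = Ia2 k then 1 else 0)"
    using kron by (metis B_simps bidx_mem(4) atLeastAtMost_iff)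
  have dv_b1: "\<And>i k. i \<in> bidx_set n \<Longrightarrow> k \<in> {1..n} \<Longrightarrow> d i (b1 k) = (if i = Ib1 k then 1 else 0)"
    using kron by (metis B_simps bidx_mem(5) atLeastAtMost_iff)
  have dv_b2: "\<And>i k. i \<in> bidx_set n \<Longrightarrow> k \<in> {1..n} \<Longrightarrow> d i (b2 k) = (if i = Ib2 k then 1 else 0)"
    using kron by (metis B_simps bidx_mem(6) atLeastAtMost_iff)
  have eq1: "\<forall>a\<in>SY.fams n a1 a2 b1 b2. \<forall>b\<in>SY.fams n a1 a2 b1 b2. om a b = \<Phi>1 a b"
  proof (intro ballI)
    fix a b assume a: "a \<in> SY.fams n a1 a2 b1 b2" and b: "b \<in> SY.fams n a1 a2 b1 b2"
    from a obtain k where k: "k \<in> {1..n}" "a = a1 k \<or> a = a2 k \<or> a = b1 k \<or> a = b2 k"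
      unfolding SY.fams_def by blast
    from b obtain l where l: "l \<in> {1..n}" "b = a1 l \<or> b = a2 l \<or> b = b1 l \<or> b = b2 l"
      unfolding SY.fams_def by blast
    from k(2) l(2) show "om a b = \<Phi>1 a b" using k(1) l(1)
      by (elim disjE) (simp_all add: \<Phi>1_def dv_a1 dv_a2 dv_b1 dv_b2 Gs sum_kron sum_negf)
  qed
  have e2V: "\<And>u v. u \<in> V \<Longrightarrow> v \<in> V \<Longrightarrow> \<Omega> e2 u v = - om u (I v)"
    using iii unfolding e2_def om_def by blast
  have eq2: "\<forall>a\<in>SY.fams n a1 a2 b1 b2. \<forall>b\<in>SY.fams n a1 a2 b1 b2. \<Omega> e2 a b = \<Phi>2 a b"
  proof (intro ballI)
    fix a b assume a: "a \<in> SY.fams n a1 a2 b1 b2" and b: "b \<in> SY.fams n a1 a2 b1 b2"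
    from a obtain k where k: "k \<in> {1..n}" "a = a1 k \<or> a = a2 k \<or> a = b1 k \<or> a = b2 k"
      unfolding SY.fams_def by blast
    from b obtain l where l: "l \<in> {1..n}" "b = a1 l \<or> b = a2 l \<or> b = b1 l \<or> b = b2 l"
      unfolding SY.fams_def by blast
    from k(2) l(2) show "\<Omega> e2 a b = \<Phi>2 a b" using k(1) l(1)
      by (elim disjE) (simp_all add: e2V inV1 inV2 inV3 inV4 Ia1 Ia2 Ib1 Ib2
          \<Phi>2_def dv_a1 dv_a2 dv_b1 dv_b2 Gs sum_kron sum_negf)
  qed
  have Phi1V: "\<And>u v. u \<in> V \<Longrightarrow> v \<in> V \<Longrightarrow> om u v = \<Phi>1 u v"
  proof -
    fix u v assume u: "u \<in> V" and v: "v \<in> V"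
    show "om u v = \<Phi>1 u v"
      by (rule bil_eq[OF l2' l3' linP11 linP12 eq1]) (use u v C3 in auto)
  qed
  have Phi2V: "\<And>u v. u \<in> V \<Longrightarrow> v \<in> V \<Longrightarrow> \<Omega> e2 u v = \<Phi>2 u v"
  proof -
    fix u v assume u: "u \<in> V" and v: "v \<in> V"
    show "\<Omega> e2 u v = \<Phi>2 u v"
      by (rule bil_eq[OF O.l2 O.l3 linP21 linP22 eq2]) (use u v C3 in auto)
  qed
  have dq: "\<And>i y. i \<noteq> Ie1 \<Longrightarrow> i \<noteq> Ie2 \<Longrightarrow> d i (q y) = d i y"
  proof -
    fix i y assume "i \<noteq> Ie1" "i \<noteq> Ie2"
    then show "d i (q y) = d i y" by (cases i) (simp_all add: d_simps qv qV)
  qed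
  have s1: "\<And>y z. \<Omega> e1 (q y) (q z) = \<Phi>1 y z"
    using Phi1V[OF qV qV] unfolding om_def \<Phi>1_def by (simp add: dq)
  have s2: "\<And>y z. \<Omega> e2 (q y) (q z) = \<Phi>2 y z"
    using Phi2V[OF qV qV] unfolding \<Phi>2_def by (simp add: dq)
  have s3: "\<And>z. \<Omega> e1 e2 (q z) = \<nu> z"
  proof -
    fix z
    have "\<nu> z = \<Omega> e1 e2 (\<epsilon>1 z *\<^sub>R e1 + \<epsilon>2 z *\<^sub>R e2 + q z)" unfolding \<nu>_def by (simp only: xq)
    then show "\<Omega> e1 e2 (q z) = \<nu> z" by simp
  qed
  have formula: "\<forall>x y z. \<Omega> x y z =
          (\<Sum>k=1..n.
              wedge3 (d (Ib1 k)) (d (Ia1 k)) (d Ie2) x y z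
            + wedge3 (d (Ib2 k)) (d (Ia2 k)) (d Ie2) x y z
            - wedge3 (d (Ib1 k)) (d (Ia2 k)) (d Ie1) x y z
            + wedge3 (d (Ib2 k)) (d (Ia1 k)) (d Ie1) x y z)
          + wedge3 \<nu> (d Ie1) (d Ie2) x y z"
  proof (intro allI)
    fix x y z
    have h0: "\<Omega> (q x) (q y) (q z) = 0" using i qV by blast
    have sumR: "(\<Sum>k=1..n. wedge3 (d (Ib1 k)) (d (Ia1 k)) (d Ie2) x y z + wedge3 (d (Ib2 k)) (d (Ia2 k)) (d Ie2) x y z - wedge3 (d (Ib1 k)) (d (Ia2 k)) (d Ie1) x y z + wedge3 (d (Ib2 k)) (d (Ia1 k)) (d Ie1) x y z) = d Ie2 z * \<Phi>2 x y - d Ie2 y * \<Phi>2 x z + d Ie2 x * \<Phi>2 y z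
       + d Ie1 z * \<Phi>1 x y - d Ie1 y * \<Phi>1 x z + d Ie1 x * \<Phi>1 y z"
    proof -
      have "(\<Sum>k=1..n. wedge3 (d (Ib1 k)) (d (Ia1 k)) (d Ie2) x y z + wedge3 (d (Ib2 k)) (d (Ia2 k)) (d Ie2) x y z - wedge3 (d (Ib1 k)) (d (Ia2 k)) (d Ie1) x y z + wedge3 (d (Ib2 k)) (d (Ia1 k)) (d Ie1) x y z) = (\<Sum>k=1..n. d Ie2 z * ((d (Ib1 k) x * d (Ia1 k) y - d (Ib1 k) y * d (Ia1 k) x) + (d (Ib2 k) x * d (Ia2 k) y - d (Ib2 k) y * d (Ia2 k) x)) - d Ie2 y * ((d (Ib1 k) x * d (Ia1 k) z - d (Ib1 k) z * d (Ia1 k) x) + (d (Ib2 k) x * d (Ia2 k) z - d (Ib2 k) z * d (Ia2 k) x)) + d Ie2 x * ((d (Ib1 k) y * d (Ia1 k) z - d (Ib1 k) z * d (Ia1 k) y) + (d (Ib2 k) y * d (Ia2 k) z - d (Ib2 k) z * d (Ia2 k) y)) + d Ie1 z * (- (d (Ib1 k) x * d (Ia2 k) y - d (Ib1 k) y * d (Ia2 k) x) + (d (Ib2 k) x * d (Ia1 k) y - d (Ib2 k) y * d (Ia1 k) x)) - d Ie1 y * (- (d (Ib1 k) x * d (Ia2 k) z - d (Ib1 k) z * d (Ia2 k) x) + (d (Ib2 k) x * d (Ia1 k) z - d (Ib2 k) z * d (Ia1 k) x)) + d Ie1 x * (- (d (Ib1 k) y * d (Ia2 k) z - d (Ib1 k)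 z * d (Ia2 k) y) + (d (Ib2 k) y * d (Ia1 k) z - d (Ib2 k) z * d (Ia1 k) y)))"
        by (rule sum.cong[OF refl]) (simp add: wedge3_def algebra_simps)
      also have "\<dots> = d Ie2 z * \<Phi>2 x y - d Ie2 y * \<Phi>2 x z + d Ie2 x * \<Phi>2 y z
       + d Ie1 z * \<Phi>1 x y - d Ie1 y * \<Phi>1 x z + d Ie1 x * \<Phi>1 y z"
        unfolding \<Phi>1_def \<Phi>2_def sum_distrib_left sum_subtractf[symmetric] sum.distrib[symmetric] by (rule refl)
      finally show ?thesis .
    qed
    have "\<Omega> x y z = \<Omega> (\<epsilon>1 x *\<^sub>R e1 + \<epsilon>2 x *\<^sub>R e2 + q x) (\<epsilon>1 y *\<^sub>R e1 + \<epsilon>2 y *\<^sub>R e2 + q y)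
        (\<epsilon>1 z *\<^sub>R e1 + \<epsilon>2 z *\<^sub>R e2 + q z)" by (simp only: xq)
    also have "\<dots> = \<epsilon>1 x * \<Omega> e1 (q y) (q z) - \<epsilon>1 y * \<Omega> e1 (q x) (q z) + \<epsilon>1 z * \<Omega> e1 (q x) (q y)
      + \<epsilon>2 x * \<Omega> e2 (q y) (q z) - \<epsilon>2 y * \<Omega> e2 (q x) (q z) + \<epsilon>2 z * \<Omega> e2 (q x) (q y)
      + (\<epsilon>1 x * \<epsilon>2 y - \<epsilon>2 x * \<epsilon>1 y) * \<Omega> e1 e2 (q z) - (\<epsilon>1 x * \<epsilon>2 z - \<epsilon>2 x * \<epsilon>1 z) * \<Omega> e1 e2 (q y)
      + (\<epsilon>1 y * \<epsilon>2 z - \<epsilon>2 y * \<epsilon>1 z) * \<Omega> e1 e2 (q x)"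
      by (rule O.decomp3[OF h0])
    also have "\<dots> = \<epsilon>1 x * \<Phi>1 y z - \<epsilon>1 y * \<Phi>1 x z + \<epsilon>1 z * \<Phi>1 x y
      + \<epsilon>2 x * \<Phi>2 y z - \<epsilon>2 y * \<Phi>2 x z + \<epsilon>2 z * \<Phi>2 x y
      + (\<epsilon>1 x * \<epsilon>2 y - \<epsilon>2 x * \<epsilon>1 y) * \<nu> z - (\<epsilon>1 x * \<epsilon>2 z - \<epsilon>2 x * \<epsilon>1 z) * \<nu> y
      + (\<epsilon>1 y * \<epsilon>2 z - \<epsilon>2 y * \<epsilon>1 z) * \<nu> x"
      by (simp only: s1 s2 s3)
    also have "\<dots> = (\<Sum>k=1..n. wedge3 (d (Ib1 k)) (d (Ia1 k)) (d Ie2) x y z + wedge3 (d (Ib2 k)) (d (Ia2 k)) (d Ie2) x y z - wedge3 (d (Ib1 k)) (d (Ia2 k)) (d Ie1) x y z + wedge3 (d (Ib2 k)) (d (Ia1 k)) (d Ie1) x y z) + wedge3 \<nu> (d Ie1) (d Ie2) x y z"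
      unfolding sumR by (simp add: wedge3_def d_simps(1,2) algebra_simps)
    finally show "\<Omega> x y z = (\<Sum>k=1..n. wedge3 (d (Ib1 k)) (d (Ia1 k)) (d Ie2) x y z + wedge3 (d (Ib2 k)) (d (Ia2 k)) (d Ie2) x y z - wedge3 (d (Ib1 k)) (d (Ia2 k)) (d Ie1) x y z + wedge3 (d (Ib2 k)) (d (Ia1 k)) (d Ie1) x y z) + wedge3 \<nu> (d Ie1) (d Ie2) x y z" .
  qed
  show ?thesis
    apply (rule exI[of _ n])
    apply (rule conjI[OF dimV])
    apply (rule exI[of _ B], rule exI[of _ d], rule exI[of _ \<nu>])
    using basis dual spanT' spanV Irel1 Irel2 lin_nu nu0 formula by blast
qed


end
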